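(* Let $U$ be a random variable uniformly distributed on $S$ and let $p,q$ be two probabilities on the finite set $A$. Then $$\mathbb P[g(U,p)\ne g(U,q)]\le 2\|p-q\|.$$ If moreover $A$ has exactly two elements, then $\mathbb P[g(U,p)\ne g(U,q)]=\|p-q\|$.
   Context: $A$ finite with a fixed total order; $(E_a)_{a\in A}$ canonical basis of $\mathbb R^A$; $H=\{x\in\mathbb R^A:\sum_ax_a=1\}$; $S=(\mathbb R_+)^A\cap H$ with its uniform law (normalized Lebesgue measure on $H$). For a probability $p$ on $A$: $G(p)=\sum_ap(a)E_a$; $S_a(p)=\mathrm{Conv}(\{G(p)\}\cup\{E_b:b\ne a\})$; $g(s,p)=\min\{a\in A:s\in S_a(p)\}$. $\|p-q\|=\frac12\sum_a|p(a)-q(a)|$ is the total variation distance. *)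

theory Defs
  imports "HOL-Analysis.Analysis" "HOL-Probability.Probability"
begin

text \<open>The finite totally ordered set A is a type 'a of class {finite, linorder};
  R^A is real^'a; the canonical basis vector E_a is axis a 1.\<close>

definition simplexH :: "(real^'a::finite) set" where
  "simplexH = {x. (\<Sum>a\<in>UNIV. x $ a) = 1}"

definition simplexS :: "(real^'a::finite) set" where
  "simplexS = {x. (\<forall>a. 0 \<le> x $ a) \<and> (\<Sum>a\<in>UNIV. x $ a) = 1}"

definition Gp :: "'a::finite pmf \<Rightarrow> real^'a" where
  "Gp p = (\<chi> a. pmf p a)"

definition Sa :: "'a::finite \<Rightarrow> 'a pmf \<Rightarrow> (real^'a) set" where
  "Sa a p = convex hull (insert (Gp p) {axis b 1 | b. b \<noteq> a})"

definition gfun :: "real^'a::{finite,linorder} \<Rightarrow> 'a pmf \<Rightarrow> 'a" where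
  "gfun s p = (LEAST a. s \<in> Sa a p)"

definition tvdist :: "'a::finite pmf \<Rightarrow> 'a pmf \<Rightarrow> real" where
  "tvdist p q = (1/2) * (\<Sum>a\<in>UNIV. \<bar>pmf p a - pmf q a\<bar>)"

text \<open>Lebesgue measure on the hyperplane H, via the affine chart that drops the
  coordinate a0 = the least element of A (any choice gives the same normalized law).\<close>

definition a0 :: "'a::{finite,linorder}" where
  "a0 = (LEAST b. True)"

definition chartH :: "('a \<Rightarrow> real) \<Rightarrow> real^'a::{finite,linorder}" where
  "chartH y = (\<chi> a. if a = a0 then 1 - (\<Sum>b\<in>UNIV - {a0}. y b) else y a)"

definition lebesgueH :: "(real^'a::{finite,linorder}) measure" where
  "lebesgueH = distr (PiM (UNIV - {a0}) (\<lambda>_. lborel)) borel chartH"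

definition uniformS :: "(real^'a::{finite,linorder}) measure" where
  "uniformS = uniform_measure lebesgueH simplexS"

end

theory Submission
  imports Defs
begin


lemma chartH_nth: "chartH y $ b = (if b = a0 then 1 - (\<Sum>c\<in>UNIV - {a0}. y c) else y b)"
  by (simp add: chartH_def)

lemma sum_chartH: "(\<Sum>b\<in>UNIV. chartH y $ b) = 1"
proof -
  have "(\<Sum>b\<in>UNIV. chartH y $ b) = chartH y $ a0 + (\<Sum>b\<in>UNIV - {a0}. chartH y $ b)"
    by (simp add: sum.remove)
  also have "(\<Sum>b\<in>UNIV - {a0}. chartH y $ b) = (\<Sum>b\<in>UNIV - {a0}. y b)"
    by (intro sum.cong) (auto simp: chartH_nth)
  finally show ?thesis by (simp add: chartH_nth)
qed

lemma chartH_measurable [measurable]: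
  "chartH \<in> measurable (PiM (UNIV - {a0}) (\<lambda>_. lborel)) (borel :: (real^'a::{finite,linorder}) measure)"
proof -
  have "(\<lambda>x. chartH x $ i) \<in> borel_measurable (PiM (UNIV - {a0}) (\<lambda>_. lborel))" for i :: 'a
    by (cases "i = a0") (simp_all add: chartH_nth)
  then show ?thesis
    by (subst borel_measurable_euclidean_space) (auto simp: Basis_vec_def cart_eq_inner_axis[symmetric] inner_commute)
qed



definition Sg :: "'a set \<Rightarrow> ('a \<Rightarrow> real) \<Rightarrow> real \<Rightarrow> ('a \<Rightarrow> real) set" where
  "Sg A c t = {x. (\<forall>i\<in>A. c i \<le> x i) \<and> sum x A \<le> t}"

lemma Sg_meas [measurable]:
  assumes "finite A"
  shows "Sg A c t \<inter> space (Pi\<^sub>M A (\<lambda>_. lborel)) \<in> sets (Pi\<^sub>M A (\<lambda>_. lborel))"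
proof -
  have "Sg A c t \<inter> space (Pi\<^sub>M A (\<lambda>_. lborel)) =
          {x\<in>space (Pi\<^sub>M A (\<lambda>_. lborel)). (\<forall>i\<in>A. c i \<le> x i) \<and> sum x A \<le> t}"
    by (auto simp: Sg_def)
  also have "\<dots> \<in> sets (Pi\<^sub>M A (\<lambda>_. lborel))"
    using assms by measurable
  finally show ?thesis .
qed

lemma Sg_step:
  assumes "b \<notin> A" "finite A"
  shows "x(b := y) \<in> Sg (insert b A) c t \<longleftrightarrow> c b \<le> y \<and> x \<in> Sg A c (t - y)"
  using assms unfolding Sg_def
  by (auto simp: sum_delta_notmem algebra_simps)

lemma emeasure_Sg:
  fixes t :: real
  assumes "finite (A :: 'a set)"
  shows "emeasure (Pi\<^sub>M A (\<lambda>_. lborel)) (Sg A c t \<inter> space (Pi\<^sub>M A (\<lambda>_. lborel)))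
          = (if sum c A \<le> t then ennreal ((t - sum c A) ^ card A / fact (card A)) else 0)"
  using assms
proof (induction arbitrary: t rule: finite_induct)
  case (empty t)
  thus ?case by (simp add: PiM_empty Sg_def)
next
  case (insert b A t)
  define n where "n = Suc (card A)"
  have n_pos: "n > 0" by (simp add: n_def)
  let ?M = "\<lambda>A. (Pi\<^sub>M A (\<lambda>_. lborel))"
  note meas = Sg_meas
  interpret product_sigma_finite "\<lambda>_. lborel"
    by standard
  define s where "s = t - sum c A"
  have "emeasure (?M (insert b A)) (Sg (insert b A) c t \<inter> space (?M (insert b A))) =
        nn_integral (?M (insert b A))
          (\<lambda>x. indicator (Sg (insert b A) c t \<inter> space (?M (insert b A))) x)"
    using insert.hyps by (subst nn_integral_indicator) auto
  also have "\<dots> = (\<integral>\<^sup>+ y. \<integral>\<^sup>+ x. indicator (Sg (insert b A) c t \<inter> space (?M (insert b A)))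
                    (x(b := y)) \<partial>?M A \<partial>lborel)"
    using insert.prems insert.hyps by (intro product_nn_integral_insert_rev) auto
  also have "\<dots> = (\<integral>\<^sup>+ y. \<integral>\<^sup>+ x. indicator {c b..} y * indicator (Sg A c (t - y) \<inter> space (?M A)) x
                    \<partial>?M A \<partial>lborel)"
    using insert.hyps insert.prems Sg_step[of b A]
    by (intro nn_integral_cong)
       (auto simp: fun_eq_iff indicator_def space_PiM PiE_def extensional_def)
  also have "\<dots> = (\<integral>\<^sup>+ y. indicator {c b..} y * (\<integral>\<^sup>+ x. indicator (Sg A c (t - y) \<inter> space (?M A)) x
                    \<partial>?M A) \<partial>lborel)" using \<open>finite A\<close>
    by (subst nn_integral_cmult) auto
  also have "\<dots> = (\<integral>\<^sup>+ y. indicator {c b..} y * emeasure (?M A) (Sg A c (t - y) \<inter> space (?M A)) \<partial>lborel)"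
    using \<open>finite A\<close> by (subst nn_integral_indicator) auto
  also have "\<dots> = (\<integral>\<^sup>+ y. ennreal ((s - y) ^ card A / fact (card A)) * indicator {c b .. s} y \<partial>lborel)"
    using insert.IH by (intro nn_integral_cong) (auto simp: indicator_def s_def; simp add: algebra_simps)
  finally have eq: "emeasure (?M (insert b A)) (Sg (insert b A) c t \<inter> space (?M (insert b A))) =
     (\<integral>\<^sup>+ y. ennreal ((s - y) ^ card A / fact (card A)) * indicator {c b .. s} y \<partial>lborel)" .
  have ci: "card (insert b A) = n" using insert.hyps by (simp add: n_def)
  have sc: "sum c (insert b A) = c b + sum c A" using insert.hyps by simp
  show ?case
  proof (cases "c b \<le> s")
    case True
    have "((\<lambda>x. - ((s - x) ^ n / fact n)) has_real_derivative (s - x) ^ card A / fact (card A)) (at x)" for x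
      by (rule derivative_eq_intros refl | simp add: n_def)+
    hence "(\<integral>\<^sup>+ y. ennreal ((s - y) ^ card A / fact (card A)) * indicator {c b .. s} y \<partial>lborel) =
           ennreal ((-((s - s) ^ n / fact n)) - (-((s - c b) ^ n / fact n)))"
      using True by (intro nn_integral_FTC_Icc) auto
    also have "(-((s - s) ^ n / fact n)) - (-((s - c b) ^ n / fact n)) = (t - sum c (insert b A)) ^ n / fact n"
      using n_pos by (simp add: s_def sc algebra_simps)
    finally show ?thesis using eq True ci by (simp add: s_def sc algebra_simps)
  next
    case False
    then have "(\<integral>\<^sup>+ y. ennreal ((s - y) ^ card A / fact (card A)) * indicator {c b .. s} y \<partial>lborel) = 0"
      by simp
    then show ?thesis using eq False by (simp add: s_def sc)
  qed
qed



definition Tset :: "'a \<Rightarrow> real^'a::{finite,linorder} \<Rightarrow> (real^'a::{finite,linorder}) set" where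
  "Tset a w = {s \<in> simplexS. \<forall>b. s$a * w$b \<le> s$b * w$a}"

lemma closed_Tset:
  fixes w :: "real^'a::{finite,linorder}"
  shows "closed (Tset a w)"
proof -
  have "Tset a w = (\<Inter>b. {s. 0 \<le> s$b}) \<inter> {s. (\<Sum>b\<in>UNIV. s$b) = 1} \<inter> (\<Inter>b. {s. s$a * w$b \<le> s$b * w$a})"
    by (auto simp: Tset_def simplexS_def)
  also have "closed \<dots>"
    by (intro closed_Int closed_INT ballI closed_Collect_le closed_Collect_eq continuous_intros)
  finally show ?thesis .
qed

lemma Tset_borel [measurable]:
  fixes w :: "real^'a::{finite,linorder}"
  shows "Tset a w \<in> sets borel"
  using closed_Tset by (rule borel_closed)

lemma slice_vol:
  fixes x :: "real^'a::{finite,linorder}"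
  assumes aa0: "a \<noteq> a0" and xS: "x \<in> simplexS" and xa: "x$a > 0"
  shows "emeasure (PiM (UNIV - {a0}) (\<lambda>_. lborel)) (chartH -` Tset a x \<inter> space (PiM (UNIV - {a0}) (\<lambda>_. lborel)))
         = ennreal (x$a / fact (card (UNIV - {a0::'a})))"
proof -
  define J where "J = UNIV - {a0} - {a}"
  have IJ: "UNIV - {a0} = insert a J" using aa0 by (auto simp: J_def)
  have aJ: "a \<notin> J" "a0 \<notin> J" and fJ: "finite J" by (auto simp: J_def)
  define k where "k = card J"
  have cI: "card (UNIV - {a0::'a}) = Suc k" unfolding IJ k_def using aJ fJ by simp
  let ?M = "\<lambda>A. (Pi\<^sub>M A (\<lambda>_. lborel::real measure))"
  define X where "X = chartH -` Tset a x \<inter> space (?M (insert a J))"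
  have X_sets: "X \<in> sets (?M (insert a J))"
    unfolding X_def IJ[symmetric] by (rule measurable_sets[OF chartH_measurable]) simp
  have x_nonneg: "\<And>b. 0 \<le> x$b" using xS by (auto simp: simplexS_def)
  have sumx: "x$a0 + x$a + (\<Sum>b\<in>J. x$b) = 1"
  proof -
    have U: "insert a0 (insert a J) = UNIV" by (auto simp: J_def)
    have "(\<Sum>b\<in>insert a0 (insert a J). x$b) = 1" unfolding U using xS by (auto simp: simplexS_def)
    then show ?thesis using aJ aa0 fJ by (simp add: add.assoc)
  qed
  define c where "c = (\<lambda>h::real. \<lambda>b. h / x$a * x$b)"
  define t where "t = (\<lambda>h::real. 1 - h - h / x$a * x$a0)"
  have allsplit: "(\<forall>b. P b) \<longleftrightarrow> P a0 \<and> P a \<and> (\<forall>b\<in>J. P b)" for P :: "'a \<Rightarrow> bool"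
    unfolding J_def by blast
  have key: "u(a := h) \<in> X \<longleftrightarrow> 0 \<le> h \<and> u \<in> Sg J (c h) (t h)" if u: "u \<in> space (?M J)" for u h
  proof -
    have sp: "u(a := h) \<in> space (?M (insert a J))"
      using u by (auto simp: space_PiM PiE_def extensional_def)
    have sumu: "(\<Sum>b\<in>insert a J. (u(a:=h)) b) = h + (\<Sum>b\<in>J. u b)"
    proof -
      have "(\<Sum>b\<in>J. (u(a:=h)) b) = (\<Sum>b\<in>J. u b)" using aJ by (intro sum.cong) auto
      then show ?thesis using aJ fJ by simp
    qed
    have s_a0: "chartH (u(a:=h)) $ a0 = 1 - h - (\<Sum>b\<in>J. u b)"
      using sumu by (simp add: chartH_nth IJ)
    have s_a: "chartH (u(a:=h)) $ a = h" using aa0 by (simp add: chartH_nth)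
    have s_J: "b \<in> J \<Longrightarrow> chartH (u(a:=h)) $ b = u b" for b using aJ by (auto simp: chartH_nth J_def)
    have "u(a := h) \<in> X \<longleftrightarrow> (\<forall>b. 0 \<le> chartH (u(a:=h)) $ b) \<and>
             (\<forall>b. h * x$b \<le> chartH (u(a:=h)) $ b * x$a)"
      using sp by (simp add: X_def Tset_def simplexS_def sum_chartH s_a)
    also have "\<dots> \<longleftrightarrow> 0 \<le> h \<and> u \<in> Sg J (c h) (t h)"
    proof
      assume H: "(\<forall>b. 0 \<le> chartH (u(a:=h)) $ b) \<and> (\<forall>b. h * x$b \<le> chartH (u(a:=h)) $ b * x$a)"
      have "0 \<le> chartH (u(a:=h)) $ a" using H by blast
      then have h0: "0 \<le> h" unfolding s_a .
      have "\<forall>b\<in>J. c h b \<le> u b"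
      proof
        fix b assume b: "b \<in> J"
        have "h * x$b \<le> chartH (u(a:=h)) $ b * x$a" using H by blast
        then have "h * x$b \<le> u b * x$a" unfolding s_J[OF b] .
        then show "c h b \<le> u b" using xa by (simp add: c_def field_simps)
      qed
      moreover have "sum u J \<le> t h"
      proof -
        have "h * x$a0 \<le> chartH (u(a:=h)) $ a0 * x$a" using H by blast
        then have "h * x$a0 \<le> (1 - h - (\<Sum>b\<in>J. u b)) * x$a" unfolding s_a0 .
        then show ?thesis using xa by (simp add: t_def field_simps)
      qed
      ultimately show "0 \<le> h \<and> u \<in> Sg J (c h) (t h)" using h0 by (simp add: Sg_def)
    next
      assume H: "0 \<le> h \<and> u \<in> Sg J (c h) (t h)"
      then have h0: "0 \<le> h" and cu: "\<And>b. b \<in> J \<Longrightarrow> h / x$a * x$b \<le> u b" and su: "sum u J \<le> t h"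
        by (auto simp: Sg_def c_def)
      have A0: "h * x$a0 \<le> (1 - h - (\<Sum>b\<in>J. u b)) * x$a"
        using su xa by (simp add: t_def field_simps)
      have AJ: "h * x$b \<le> u b * x$a" if "b \<in> J" for b
        using cu[OF that] xa by (simp add: field_simps)
      have n0: "0 \<le> h * x$b" for b using h0 x_nonneg[of b] by (rule mult_nonneg_nonneg)
      show "(\<forall>b. 0 \<le> chartH (u(a:=h)) $ b) \<and> (\<forall>b. h * x$b \<le> chartH (u(a:=h)) $ b * x$a)"
        unfolding allsplit[of "\<lambda>b. 0 \<le> chartH (u(a:=h)) $ b"]
           allsplit[of "\<lambda>b. h * x$b \<le> chartH (u(a:=h)) $ b * x$a"]
      proof (intro conjI ballI)
        show "0 \<le> chartH (u(a:=h)) $ a0"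
        proof -
          have "0 \<le> chartH (u(a:=h)) $ a0 * x$a" unfolding s_a0 by (rule order_trans[OF n0[of a0] A0])
          then show ?thesis using xa by (simp add: zero_le_mult_iff)
        qed
        show "h * x$a0 \<le> chartH (u(a:=h)) $ a0 * x$a" using A0 s_a0 by simp
        show "0 \<le> chartH (u(a:=h)) $ a" using s_a h0 by simp
        show "h * x$a \<le> chartH (u(a:=h)) $ a * x$a" using s_a by simp
        fix b assume b: "b \<in> J"
        show "0 \<le> chartH (u(a:=h)) $ b"
        proof -
          have "0 \<le> chartH (u(a:=h)) $ b * x$a" unfolding s_J[OF b] by (rule order_trans[OF n0[of b] AJ[OF b]])
          then show ?thesis using xa by (simp add: zero_le_mult_iff)
        qed
        show "h * x$b \<le> chartH (u(a:=h)) $ b * x$a" using AJ[OF b] s_J[OF b] by simp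
      qed
    qed
    finally show ?thesis .
  qed
  have diff: "t h - sum (c h) J = 1 - h / x$a" for h
  proof -
    have "sum (c h) J = h / x$a * (\<Sum>b\<in>J. x$b)" by (simp add: c_def sum_distrib_left)
    also have "(\<Sum>b\<in>J. x$b) = 1 - x$a0 - x$a" using sumx by simp
    finally show ?thesis using xa by (simp add: t_def field_simps)
  qed
  have cond: "sum (c h) J \<le> t h \<longleftrightarrow> h \<le> x$a" for h
  proof -
    have "sum (c h) J \<le> t h \<longleftrightarrow> 0 \<le> 1 - h / x$a" using diff[of h] by linarith
    also have "\<dots> \<longleftrightarrow> h \<le> x$a" using xa by (simp add: field_simps)
    finally show ?thesis .
  qed
  interpret product_sigma_finite "\<lambda>_. lborel::real measure" by standard
  have "emeasure (?M (insert a J)) X = (\<integral>\<^sup>+ y. indicator X y \<partial>?M (insert a J))"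
    using X_sets by simp
  also have "\<dots> = (\<integral>\<^sup>+ h. \<integral>\<^sup>+ u. indicator X (u(a := h)) \<partial>?M J \<partial>lborel)"
    using X_sets fJ aJ by (intro product_nn_integral_insert_rev) auto
  also have "\<dots> = (\<integral>\<^sup>+ h. \<integral>\<^sup>+ u. indicator {0..} h * indicator (Sg J (c h) (t h) \<inter> space (?M J)) u \<partial>?M J \<partial>lborel)"
    by (intro nn_integral_cong) (auto simp: key indicator_def)
  also have "\<dots> = (\<integral>\<^sup>+ h. indicator {0..} h * emeasure (?M J) (Sg J (c h) (t h) \<inter> space (?M J)) \<partial>lborel)"
    using fJ by (intro nn_integral_cong) (simp add: nn_integral_cmult)
  also have "\<dots> = (\<integral>\<^sup>+ h. ennreal ((1 - h / x$a) ^ k / fact k) * indicator {0 .. x$a} h \<partial>lborel)"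
    using xa by (intro nn_integral_cong) (auto simp: emeasure_Sg fJ diff cond k_def indicator_def)
  also have "\<dots> = ennreal ((- x$a * (1 - x$a / x$a) ^ Suc k / fact (Suc k)) - (- x$a * (1 - 0 / x$a) ^ Suc k / fact (Suc k)))"
  proof (intro nn_integral_FTC_Icc)
    show "0 \<le> x$a" using xa by simp
    fix h :: real assume "h \<in> {0..x$a}"
    then show "0 \<le> (1 - h / x$a) ^ k / fact k" using xa by (simp add: field_simps)
    have d1: "((\<lambda>h. 1 - h / x$a) has_real_derivative (- 1 / x$a)) (at h)"
      using xa by (auto intro!: derivative_eq_intros)
    note d2 = DERIV_cdivide[OF DERIV_cmult[OF DERIV_power[OF d1, of "Suc k"], of "- x$a"], of "fact (Suc k)"]
    have e: "- x$a * (of_nat (Suc k) * (- 1 / x$a * (1 - h / x$a) ^ (Suc k - Suc 0))) / fact (Suc k) = (1 - h / x$a) ^ k / fact k"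
      using xa by (simp add: fact_Suc field_simps del: of_nat_Suc)
    show "((\<lambda>h. - x$a * (1 - h / x$a) ^ Suc k / fact (Suc k)) has_real_derivative (1 - h / x$a) ^ k / fact k) (at h)"
      using d2 unfolding e .
  qed auto
  also have "\<dots> = ennreal (x$a / fact (Suc k))" using xa by simp
  finally show ?thesis unfolding cI unfolding X_def IJ .
qed



lemma null_PiM_hyperplane:
  assumes fI: "finite I" and cI: "c \<in> I" and ac: "\<alpha> c \<noteq> 0"
  shows "emeasure (PiM I (\<lambda>_. lborel::real measure)) {y \<in> space (PiM I (\<lambda>_. lborel)). (\<Sum>b\<in>I. \<alpha> b * y b) = e} = 0"
proof -
  define J where "J = I - {c}"
  have IJ: "I = insert c J" and cJ: "c \<notin> J" and fJ: "finite J" using cI fI by (auto simp: J_def)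
  let ?M = "\<lambda>A. (Pi\<^sub>M A (\<lambda>_. lborel::real measure))"
  define X where "X = {y \<in> space (?M (insert c J)). (\<Sum>b\<in>insert c J. \<alpha> b * y b) = e}"
  have X_sets: "X \<in> sets (?M (insert c J))" unfolding X_def using fJ by measurable
  interpret product_sigma_finite "\<lambda>_. lborel::real measure" by standard
  have "emeasure (?M (insert c J)) X = (\<integral>\<^sup>+ y. indicator X y \<partial>?M (insert c J))"
    using X_sets by simp
  also have "\<dots> = (\<integral>\<^sup>+ x. \<integral>\<^sup>+ y. indicator X (x(c := y)) \<partial>lborel \<partial>?M J)"
    using X_sets fJ cJ by (intro product_nn_integral_insert) auto
  also have "\<dots> = (\<integral>\<^sup>+ x. 0 \<partial>?M J)"
  proof (intro nn_integral_cong)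
    fix x assume x: "x \<in> space (?M J)"
    have sp: "x(c := y) \<in> space (?M (insert c J))" for y
      using x by (auto simp: space_PiM PiE_def extensional_def)
    have sm: "(\<Sum>b\<in>insert c J. \<alpha> b * (x(c:=y)) b) = \<alpha> c * y + (\<Sum>b\<in>J. \<alpha> b * x b)" for y
    proof -
      have "(\<Sum>b\<in>J. \<alpha> b * (x(c:=y)) b) = (\<Sum>b\<in>J. \<alpha> b * x b)" using cJ by (intro sum.cong) auto
      then show ?thesis using cJ fJ by simp
    qed
    have "indicator X (x(c := y)) = (indicator {(e - (\<Sum>b\<in>J. \<alpha> b * x b)) / \<alpha> c} y :: ennreal)" for y
    proof -
      have "x(c := y) \<in> X \<longleftrightarrow> y = (e - (\<Sum>b\<in>J. \<alpha> b * x b)) / \<alpha> c"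
        using sp[of y] sm[of y] ac by (auto simp: X_def field_simps)
      then show ?thesis by (simp add: indicator_def)
    qed
    then show "(\<integral>\<^sup>+ y. indicator X (x(c := y)) \<partial>lborel) = 0"
      by simp
  qed
  also have "\<dots> = 0" by simp
  finally show ?thesis unfolding X_def IJ[symmetric] .
qed

lemma lebesgueH_emeasure:
  assumes "X \<in> sets borel"
  shows "emeasure lebesgueH X = emeasure (PiM (UNIV - {a0}) (\<lambda>_. lborel)) (chartH -` X \<inter> space (PiM (UNIV - {a0}) (\<lambda>_. lborel)))"
  unfolding lebesgueH_def using assms by (simp add: emeasure_distr)

lemma sets_lebesgueH [simp]: "sets lebesgueH = sets borel"
  by (simp add: lebesgueH_def)

lemma closed_hyperplane: "closed {s::real^'a::finite. (\<Sum>c\<in>UNIV. \<beta>$c * s$c) = e}"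
  by (intro closed_Collect_eq continuous_intros)

lemma null_hyperplane:
  fixes \<beta> :: "real^'a::{finite,linorder}"
  assumes "\<beta>$b \<noteq> \<beta>$c"
  shows "emeasure lebesgueH {s. (\<Sum>c\<in>UNIV. \<beta>$c * s$c) = e} = 0"
proof -
  obtain d where d: "\<beta>$d \<noteq> \<beta>$a0" using assms by metis
  then have dI: "d \<in> UNIV - {a0}" by auto
  let ?M = "PiM (UNIV - {a0}) (\<lambda>_. lborel::real measure)"
  have eq: "(\<Sum>c\<in>UNIV. \<beta>$c * chartH y $c) = \<beta>$a0 + (\<Sum>b\<in>UNIV - {a0}. (\<beta>$b - \<beta>$a0) * y b)" for y
  proof -
    have "(\<Sum>c\<in>UNIV. \<beta>$c * chartH y $c) = \<beta>$a0 * chartH y $ a0 + (\<Sum>c\<in>UNIV - {a0}. \<beta>$c * chartH y $c)"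
      by (simp add: sum.remove)
    also have "(\<Sum>c\<in>UNIV - {a0}. \<beta>$c * chartH y $c) = (\<Sum>c\<in>UNIV - {a0}. \<beta>$c * y c)"
      by (intro sum.cong) (auto simp: chartH_nth)
    finally show ?thesis
      by (simp add: chartH_nth algebra_simps sum_subtractf sum_distrib_left)
  qed
  have "chartH -` {s. (\<Sum>c\<in>UNIV. \<beta>$c * s$c) = e} \<inter> space ?M =
        {y \<in> space ?M. (\<Sum>b\<in>UNIV - {a0}. (\<beta>$b - \<beta>$a0) * y b) = e - \<beta>$a0}"
    by (auto simp: eq)
  moreover have "emeasure ?M {y \<in> space ?M. (\<Sum>b\<in>UNIV - {a0}. (\<beta>$b - \<beta>$a0) * y b) = e - \<beta>$a0} = 0"
    using dI d by (intro null_PiM_hyperplane) auto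
  ultimately show ?thesis
    using closed_hyperplane by (simp add: lebesgueH_emeasure borel_closed)
qed



lemma simplexS_closed: "closed simplexS"
proof -
  have "simplexS = (\<Inter>b. {s::real^'a. 0 \<le> s$b}) \<inter> {s. (\<Sum>b\<in>UNIV. s$b) = 1}"
    by (auto simp: simplexS_def)
  also have "closed \<dots>"
    by (intro closed_Int closed_INT ballI closed_Collect_le closed_Collect_eq continuous_intros)
  finally show ?thesis .
qed

lemma simplexS_borel [measurable]: "simplexS \<in> sets borel"
  using simplexS_closed by (rule borel_closed)

lemma Tset_subset: "Tset a w \<subseteq> simplexS"
  by (auto simp: Tset_def)

lemma axis_in_S: "axis a 1 \<in> simplexS"
  by (auto simp: simplexS_def axis_def sum.delta)

lemma Tset_axis: "Tset a (axis a 1) = simplexS"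
  by (auto simp: Tset_def simplexS_def axis_def)

lemma emeasure_Tset:
  fixes x :: "real^'a::{finite,linorder}"
  assumes "a \<noteq> a0" "x \<in> simplexS" "x$a > 0"
  shows "emeasure lebesgueH (Tset a x) = ennreal (x$a / fact (card (UNIV - {a0::'a})))"
  using slice_vol[OF assms] by (simp add: lebesgueH_emeasure)

lemma emeasure_S:
  assumes "(a1::'a) \<noteq> a0"
  shows "emeasure lebesgueH (simplexS::(real^'a::{finite,linorder}) set) = ennreal (1 / fact (card (UNIV - {a0::'a})))"
  using emeasure_Tset[of a1 "axis a1 1"] assms axis_in_S[of a1] by (simp add: Tset_axis)

lemma prob_uniformS:
  assumes "(a1::'a) \<noteq> a0"
  shows "prob_space (uniformS :: (real^'a::{finite,linorder}) measure)"
  unfolding uniformS_def by (rule prob_space_uniform_measure) (simp_all add: emeasure_S[OF assms])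

lemma sets_uniformS [simp]: "sets uniformS = sets borel"
  by (simp add: uniformS_def)

lemma measure_uniformS:
  assumes "(a1::'a) \<noteq> a0" and X: "X \<in> sets borel"
  shows "measure (uniformS :: (real^'a::{finite,linorder}) measure) X = fact (card (UNIV - {a0::'a})) * measure lebesgueH (simplexS \<inter> X)"
proof -
  have "measure uniformS X = measure lebesgueH (simplexS \<inter> X) / measure lebesgueH (simplexS::(real^'a::{finite,linorder}) set)"
    unfolding uniformS_def using X by (subst measure_uniform_measure) (simp_all add: emeasure_S[OF assms(1)])
  moreover have "measure lebesgueH (simplexS::(real^'a::{finite,linorder}) set) = 1 / fact (card (UNIV - {a0::'a}))"
    by (simp add: measure_def emeasure_S[OF assms(1)])
  ultimately show ?thesis by simp
qed

lemma null_uniformS: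
  fixes \<beta> :: "real^'a::{finite,linorder}"
  assumes "\<beta>$b \<noteq> \<beta>$c"
  shows "{s. (\<Sum>c\<in>UNIV. \<beta>$c * s$c) = e} \<in> null_sets uniformS"
proof -
  let ?Z = "{s. (\<Sum>c\<in>UNIV. \<beta>$c * s$c) = e}"
  have Zb: "?Z \<in> sets borel" using closed_hyperplane by (rule borel_closed)
  have "emeasure lebesgueH (simplexS \<inter> ?Z) \<le> emeasure lebesgueH ?Z"
    using Zb by (intro emeasure_mono) auto
  then have "emeasure lebesgueH (simplexS \<inter> ?Z) = 0" using null_hyperplane[OF assms] by simp
  then show ?thesis using Zb by (simp add: null_sets_def uniformS_def)
qed

lemma measure_Tset_pos:
  fixes x :: "real^'a::{finite,linorder}"
  assumes "a \<noteq> a0" "x \<in> simplexS" "x$a > 0"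
  shows "measure uniformS (Tset a x) = x$a"
proof -
  have "measure lebesgueH (Tset a x) = x$a / fact (card (UNIV - {a0::'a}))"
    using emeasure_Tset[OF assms] assms(3) by (simp add: measure_def)
  moreover have "simplexS \<inter> Tset a x = Tset a x" using Tset_subset by blast
  ultimately show ?thesis by (simp add: measure_uniformS[OF assms(1)])
qed



lemma sum_axis_pair:
  fixes s :: "real^'a::finite"
  shows "(\<Sum>c\<in>UNIV. (u *\<^sub>R axis a 1 + v *\<^sub>R axis b 1)$c * s$c) = u * s$a + v * s$b"
proof -
  have e: "(u *\<^sub>R axis a 1 + v *\<^sub>R axis b 1)$c * s$c = (if c = a then u * s$c else 0) + (if c = b then v * s$c else 0)" for c
    by (auto simp: axis_def algebra_simps)
  have "(\<Sum>c\<in>UNIV. (u *\<^sub>R axis a 1 + v *\<^sub>R axis b 1)$c * s$c)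
        = (\<Sum>c\<in>UNIV. (if c = a then u * s$c else 0)) + (\<Sum>c\<in>UNIV. (if c = b then v * s$c else 0))"
    unfolding e by (rule sum.distrib)
  then show ?thesis by simp
qed

lemma exists_pos:
  fixes x :: "real^'a::finite"
  assumes "x \<in> simplexS"
  shows "\<exists>b. x$b > 0"
proof (rule ccontr)
  assume H: "\<not> (\<exists>b. x$b > 0)"
  have "\<forall>b. x$b = 0"
  proof
    fix b
    have "0 \<le> x$b" using assms by (simp add: simplexS_def)
    with H show "x$b = 0" by (simp add: not_less) (meson order.antisym not_less)
  qed
  then show False using assms by (simp add: simplexS_def)
qed

lemma Tset_zero_sub:
  fixes x :: "real^'a::{finite,linorder}"
  assumes "x \<in> simplexS" "x$a = 0"
  shows "Tset a x \<subseteq> {s. (\<Sum>c\<in>UNIV. (1 *\<^sub>R axis a 1 + 0 *\<^sub>R axis a 1)$c * s$c) = 0}"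
proof
  fix s assume s: "s \<in> Tset a x"
  obtain b where b: "x$b > 0" using exists_pos[OF assms(1)] by blast
  have "s$a * x$b \<le> s$b * x$a" using s by (auto simp: Tset_def)
  then have "s$a * x$b \<le> 0" using assms by simp
  moreover have "0 \<le> s$a" using s by (auto simp: Tset_def simplexS_def)
  ultimately have "s$a = 0" using b by (simp add: mult_le_0_iff)
  then show "s \<in> {s. (\<Sum>c\<in>UNIV. (1 *\<^sub>R axis a 1 + 0 *\<^sub>R axis a 1)$c * s$c) = 0}"
    by (simp only: sum_axis_pair) simp
qed

lemma Tset_zero_null:
  fixes x :: "real^'a::{finite,linorder}"
  assumes "x \<in> simplexS" "x$a = 0"
  shows "Tset a x \<in> null_sets uniformS"
proof -
  obtain b where b: "x$b > 0" using exists_pos[OF assms(1)] by blast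
  then have ba: "b \<noteq> a" using assms by auto
  have ne: "(1 *\<^sub>R axis a 1 + 0 *\<^sub>R axis a 1 :: real^'a::{finite,linorder}) $ a \<noteq> (1 *\<^sub>R axis a 1 + 0 *\<^sub>R axis a 1 :: real^'a::{finite,linorder}) $ b"
    using ba by (simp add: axis_def)
  show ?thesis
    by (rule null_sets_subset[OF null_uniformS[OF ne, where e=0] _ Tset_zero_sub[OF assms]]) simp
qed

lemma Tset_pair_null:
  fixes x :: "real^'a::{finite,linorder}"
  assumes "x \<in> simplexS" "a \<noteq> b"
  shows "Tset a x \<inter> Tset b x \<in> null_sets uniformS"
proof (cases "x$a = 0 \<or> x$b = 0")
  case True
  then show ?thesis
  proof
    assume h: "x$a = 0"
    show ?thesis by (rule null_sets_subset[OF Tset_zero_null[OF assms(1) h]]) auto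
  next
    assume h: "x$b = 0"
    show ?thesis by (rule null_sets_subset[OF Tset_zero_null[OF assms(1) h]]) auto
  qed
next
  case False
  have nn: "0 \<le> x$a" "0 \<le> x$b" using assms by (auto simp: simplexS_def)
  have ne: "(x$b *\<^sub>R axis a 1 + (- x$a) *\<^sub>R axis b 1 :: real^'a::{finite,linorder}) $ a \<noteq> (x$b *\<^sub>R axis a 1 + (- x$a) *\<^sub>R axis b 1 :: real^'a::{finite,linorder}) $ b"
    using assms(2) False nn by (simp add: axis_def)
  show ?thesis
  proof (rule null_sets_subset[OF null_uniformS[OF ne, where e=0]])
    show "Tset a x \<inter> Tset b x \<subseteq> {s. (\<Sum>c\<in>UNIV. (x$b *\<^sub>R axis a 1 + (- x$a) *\<^sub>R axis b 1)$c * s$c) = 0}"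
    proof
      fix s assume "s \<in> Tset a x \<inter> Tset b x"
      then have "s$a * x$b \<le> s$b * x$a" "s$b * x$a \<le> s$a * x$b" by (auto simp: Tset_def)
      then have "x$b * s$a + (- x$a) * s$b = 0" by (simp add: algebra_simps)
      then show "s \<in> {s. (\<Sum>c\<in>UNIV. (x$b *\<^sub>R axis a 1 + (- x$a) *\<^sub>R axis b 1)$c * s$c) = 0}"
        by (simp only: sum_axis_pair mem_Collect_eq)
    qed
  qed simp
qed

lemma Tset_cover:
  fixes x :: "real^'a::{finite,linorder}"
  assumes x: "x \<in> simplexS" and s: "s \<in> simplexS"
  shows "\<exists>a. s \<in> Tset a x"
proof -
  define B where "B = {b. x$b > 0}"
  have B: "finite B" "B \<noteq> {}" using exists_pos[OF x] by (auto simp: B_def)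
  define m where "m = Min ((\<lambda>b. s$b / x$b) ` B)"
  have "m \<in> (\<lambda>b. s$b / x$b) ` B" unfolding m_def using B by (intro Min_in) auto
  then obtain a where aB: "a \<in> B" and am: "m = s$a / x$a" by blast
  have le: "s$a / x$a \<le> s$b / x$b" if "b \<in> B" for b
    using B that unfolding am[symmetric] m_def by (intro Min_le) auto
  have xa: "x$a > 0" using aB by (simp add: B_def)
  have "\<forall>b. s$a * x$b \<le> s$b * x$a"
  proof
    fix b
    show "s$a * x$b \<le> s$b * x$a"
    proof (cases "b \<in> B")
      case True
      then have "x$b > 0" by (simp add: B_def)
      with le[OF True] xa show ?thesis by (simp add: field_simps)
    next
      case False
      moreover have "0 \<le> x$b" using x by (simp add: simplexS_def)
      ultimately have "x$b = 0" by (simp add: B_def)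
      moreover have "0 \<le> s$b" using s by (simp add: simplexS_def)
      ultimately show ?thesis using xa by simp
    qed
  qed
  then show ?thesis using s by (auto simp: Tset_def)
qed



lemma Tset_sets [measurable]: "Tset a x \<in> sets uniformS"
  by simp

lemma measure_Tset:
  fixes x :: "real^'a::{finite,linorder}"
  assumes a1: "(a1::'a) \<noteq> a0" and x: "x \<in> simplexS"
  shows "measure uniformS (Tset a x) = x$a"
proof -
  interpret prob_space "uniformS :: (real^'a::{finite,linorder}) measure" by (rule prob_uniformS[OF a1])
  have xnn: "0 \<le> x$b" for b using x by (simp add: simplexS_def)
  have nz: "measure uniformS (Tset b x) = x$b" if "b \<noteq> a0" for b
  proof (cases "x$b = 0")
    case True
    then show ?thesis using measure_eq_0_null_sets[OF Tset_zero_null[OF x True]] by simp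
  next
    case False
    then have "x$b > 0" using xnn[of b] by simp
    then show ?thesis using measure_Tset_pos[OF that x] by simp
  qed
  show ?thesis
  proof (cases "a = a0")
    case False
    then show ?thesis using nz[of a] by simp
  next
    case True
    have U: "(\<Union>b. Tset b x) = simplexS"
    proof
      show "(\<Union>b. Tset b x) \<subseteq> simplexS" using Tset_subset by (intro UN_least) auto
      show "simplexS \<subseteq> (\<Union>b. Tset b x)"
      proof
        fix s :: "real^'a::{finite,linorder}" assume "s \<in> simplexS"
        from Tset_cover[OF x this] obtain b where "s \<in> Tset b x" by blast
        then show "s \<in> (\<Union>b. Tset b x)" by blast
      qed
    qed
    have "measure uniformS (\<Union>b\<in>UNIV. Tset b x) = (\<Sum>b\<in>UNIV. measure uniformS (Tset b x))"
    proof (rule measure_UNION_AE)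
      show "Tset b x \<in> fmeasurable uniformS" for b by (simp add: fmeasurable_eq_sets)
      show "pairwise (\<lambda>i j. AE s in uniformS. s \<notin> Tset i x \<or> s \<notin> Tset j x) UNIV"
        unfolding pairwise_def
      proof (intro allI impI ballI)
        fix i j :: 'a assume "i \<noteq> j"
        from Tset_pair_null[OF x this]
        show "AE s in uniformS. s \<notin> Tset i x \<or> s \<notin> Tset j x"
          by (rule AE_I') auto
      qed
    qed simp
    moreover have "measure uniformS (simplexS :: (real^'a::{finite,linorder}) set) = 1"
      using measure_uniformS[OF a1, of simplexS] emeasure_S[OF a1] by (simp add: measure_def)
    moreover have "(\<Sum>b\<in>UNIV. measure uniformS (Tset b x)) = measure uniformS (Tset a0 x) + (\<Sum>b\<in>UNIV-{a0}. x$b)"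
    proof -
      have "(\<Sum>b\<in>UNIV. measure uniformS (Tset b x)) = measure uniformS (Tset a0 x) + (\<Sum>b\<in>UNIV-{a0}. measure uniformS (Tset b x))"
        by (rule sum.remove) auto
      also have "(\<Sum>b\<in>UNIV-{a0}. measure uniformS (Tset b x)) = (\<Sum>b\<in>UNIV-{a0}. x$b)"
        using nz by (intro sum.cong) auto
      finally show ?thesis .
    qed
    moreover have "(\<Sum>b\<in>UNIV. x$b) = x$a0 + (\<Sum>b\<in>UNIV-{a0}. x$b)"
      by (rule sum.remove) auto
    moreover have "(\<Sum>b\<in>UNIV. x$b) = 1" using x by (simp add: simplexS_def)
    ultimately show ?thesis using True U by simp
  qed
qed

lemma Tset_scale:
  fixes w :: "real^'a::{finite,linorder}"
  assumes "c > 0"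
  shows "Tset a (c *\<^sub>R w) = Tset a w"
  using assms by (auto simp: Tset_def)

lemma measure_Tset_weight:
  fixes w :: "real^'a::{finite,linorder}"
  assumes a1: "(a1::'a) \<noteq> a0" and w: "\<And>b. 0 \<le> w$b" and W: "(\<Sum>b\<in>UNIV. w$b) > 0"
  shows "measure uniformS (Tset a w) = w$a / (\<Sum>b\<in>UNIV. w$b)"
proof -
  define W where "W = (\<Sum>b\<in>UNIV. w$b)"
  have "(1/W) *\<^sub>R w \<in> simplexS"
    using w W by (auto simp: simplexS_def W_def sum_divide_distrib[symmetric])
  from measure_Tset[OF a1 this, of a] Tset_scale[where c="1/W" and w=w and a=a] W
  show ?thesis by (simp add: W_def)
qed

lemma convex_Tset:
  fixes x :: "real^'a::{finite,linorder}"
  shows "convex (Tset a x)"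
  unfolding convex_def
proof (intro ballI allI impI)
  fix s t :: "real^'a::{finite,linorder}" and u v :: real
  assume s: "s \<in> Tset a x" and t: "t \<in> Tset a x" and uv: "0 \<le> u" "0 \<le> v" "u + v = 1"
  have "0 \<le> (u *\<^sub>R s + v *\<^sub>R t)$b" for b
    using s t uv by (auto simp: Tset_def simplexS_def)
  moreover have "(\<Sum>b\<in>UNIV. (u *\<^sub>R s + v *\<^sub>R t)$b) = 1"
  proof -
    have "(\<Sum>b\<in>UNIV. (u *\<^sub>R s + v *\<^sub>R t)$b) = u * (\<Sum>b\<in>UNIV. s$b) + v * (\<Sum>b\<in>UNIV. t$b)"
      by (simp add: sum.distrib sum_distrib_left)
    then show ?thesis using s t uv by (simp add: Tset_def simplexS_def)
  qed
  moreover have "(u *\<^sub>R s + v *\<^sub>R t)$a * x$b \<le> (u *\<^sub>R s + v *\<^sub>R t)$b * x$a" for b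
  proof -
    have "s$a * x$b \<le> s$b * x$a" "t$a * x$b \<le> t$b * x$a" using s t by (auto simp: Tset_def)
    then have "u * (s$a * x$b) + v * (t$a * x$b) \<le> u * (s$b * x$a) + v * (t$b * x$a)"
      using uv by (intro add_mono mult_left_mono) auto
    then show ?thesis by (simp add: algebra_simps)
  qed
  ultimately show "u *\<^sub>R s + v *\<^sub>R t \<in> Tset a x" by (auto simp: Tset_def simplexS_def)
qed

lemma Gp_in_S: "Gp p \<in> simplexS"
  by (auto simp: simplexS_def Gp_def sum_pmf_eq_1)

lemma Sa_eq_Tset:
  fixes p :: "'a::{finite,linorder} pmf"
  shows "Sa a p = Tset a (Gp p)"
proof
  define x where "x = Gp p"
  have xS: "x \<in> simplexS" unfolding x_def by (rule Gp_in_S)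
  have xnn: "0 \<le> x$b" for b using xS by (simp add: simplexS_def)
  show "Sa a p \<subseteq> Tset a (Gp p)"
    unfolding Sa_def
  proof (rule hull_minimal)
    show "convex (Tset a (Gp p))" by (rule convex_Tset)
    show "insert (Gp p) {axis b 1 | b. b \<noteq> a} \<subseteq> Tset a (Gp p)"
    proof
      fix y assume "y \<in> insert (Gp p) {axis b 1 | b. b \<noteq> a}"
      then show "y \<in> Tset a (Gp p)"
      proof
        assume "y = Gp p" then show ?thesis using xS by (auto simp: Tset_def x_def)
      next
        assume "y \<in> {axis b 1 | b. b \<noteq> a}"
        then obtain b where "b \<noteq> a" "y = axis b 1" by blast
        then show ?thesis using axis_in_S[of b] xnn by (auto simp: Tset_def x_def axis_def)
      qed
    qed
  qed
  show "Tset a (Gp p) \<subseteq> Sa a p"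
  proof
    fix s assume s: "s \<in> Tset a (Gp p)"
    then have sT: "s \<in> Tset a x" by (simp add: x_def)
    have sS: "s \<in> simplexS" using s by (simp add: Tset_def)
    have snn: "0 \<le> s$b" for b using sS by (simp add: simplexS_def)
    have ineq: "s$a * x$b \<le> s$b * x$a" for b using sT by (simp add: Tset_def)
    define t where "t = (if x$a = 0 then 0 else s$a / x$a)"
    have ta: "t * x$a = s$a"
    proof (cases "x$a = 0")
      case True
      have "s \<in> {s. (\<Sum>c\<in>UNIV. (1 *\<^sub>R axis a 1 + 0 *\<^sub>R axis a 1)$c * s$c) = 0}"
        using Tset_zero_sub[OF xS True] sT by blast
      then have "s$a = 0" by (simp only: sum_axis_pair mem_Collect_eq) simp?
      then show ?thesis using True by (simp add: t_def)
    qed (simp add: t_def)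
    have t0: "0 \<le> t" using snn xnn by (simp add: t_def)
    have lam: "0 \<le> s$b - t * x$b" for b
    proof (cases "x$a = 0")
      case True then show ?thesis using snn by (simp add: t_def)
    next
      case False
      then have xa: "x$a > 0" using xnn[of a] by simp
      have "t * x$b = s$a * x$b / x$a" using False by (simp add: t_def)
      also have "\<dots> \<le> s$b * x$a / x$a" using ineq[of b] xa by (intro divide_right_mono) auto
      also have "\<dots> = s$b" using xa by simp
      finally show ?thesis by simp
    qed
    define mu where "mu = (\<lambda>i. if i = a then t else s$i - t * x$i)"
    define y where "y = (\<lambda>i. if i = a then x else axis i 1)"
    have sumS: "(\<Sum>i\<in>UNIV. s$i) = 1" "(\<Sum>i\<in>UNIV. x$i) = 1" using sS xS by (simp_all add: simplexS_def)
    have mu_sum: "(\<Sum>i\<in>UNIV. mu i) = 1"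
    proof -
      have "(\<Sum>i\<in>UNIV. mu i) = mu a + (\<Sum>i\<in>UNIV-{a}. mu i)"
        by (rule sum.remove) auto
      also have "(\<Sum>i\<in>UNIV-{a}. mu i) = (\<Sum>i\<in>UNIV-{a}. s$i - t * x$i)"
        by (intro sum.cong) (auto simp: mu_def)
      also have "mu a = t" by (simp add: mu_def)
      also have "(\<Sum>i\<in>UNIV-{a}. s$i - t * x$i) = (\<Sum>i\<in>UNIV-{a}. s$i) - t * (\<Sum>i\<in>UNIV-{a}. x$i)"
        by (simp add: sum_subtractf sum_distrib_left)
      also have "(\<Sum>i\<in>UNIV-{a}. s$i) = 1 - s$a" using sumS(1) by (simp add: sum_diff1)
      also have "(\<Sum>i\<in>UNIV-{a}. x$i) = 1 - x$a" using sumS(2) by (simp add: sum_diff1)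
      finally show ?thesis using ta by (simp add: algebra_simps)
    qed
    have mu_nn: "0 \<le> mu i" for i using t0 lam by (simp add: mu_def)
    have s_eq: "s = (\<Sum>i\<in>UNIV. mu i *\<^sub>R y i)"
    proof (subst vec_eq_iff, intro allI)
      fix c
      have "(\<Sum>i\<in>UNIV. mu i *\<^sub>R y i) $ c = (\<Sum>i\<in>UNIV. mu i * y i $ c)" by simp
      also have "\<dots> = mu a * y a $ c + (\<Sum>i\<in>UNIV-{a}. mu i * y i $ c)"
        by (rule sum.remove) auto
      also have "(\<Sum>i\<in>UNIV-{a}. mu i * y i $ c) = (\<Sum>i\<in>UNIV-{a}. mu i * axis i 1 $ c)"
        by (intro sum.cong) (auto simp: y_def)
      also have "mu a * y a $ c = mu a * x$c" by (simp add: y_def)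
      also have "(\<Sum>i\<in>UNIV-{a}. mu i * axis i 1 $ c) = (\<Sum>i\<in>UNIV-{a}. if c = i then mu i else 0)"
        by (intro sum.cong) (auto simp: axis_def)
      also have "\<dots> = (if c \<in> UNIV - {a} then mu c else 0)" by (rule sum.delta') simp
      finally show "s $ c = (\<Sum>i\<in>UNIV. mu i *\<^sub>R y i) $ c"
        using ta by (auto simp: mu_def)
    qed
    have "(\<Sum>i\<in>UNIV. mu i *\<^sub>R y i) \<in> convex hull (insert (Gp p) {axis b 1 | b. b \<noteq> a})"
    proof (rule convex_sum)
      show "convex (convex hull (insert (Gp p) {axis b 1 | b. b \<noteq> a}))" by (rule convex_convex_hull)
      show "y i \<in> convex hull (insert (Gp p) {axis b 1 | b. b \<noteq> a})" for i
        by (rule hull_inc) (auto simp: y_def x_def)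
    qed (use mu_sum mu_nn in auto)
    then show "s \<in> Sa a p" unfolding Sa_def s_eq[symmetric] .
  qed
qed



lemma Least_mem_eq:
  fixes F :: "'a::{finite,linorder} \<Rightarrow> 'b set"
  shows "{s. (LEAST a. s \<in> F a) = c} = (F c - (\<Union>d\<in>{d. d < c}. F d)) \<union> (if (LEAST a::'a. False) = c then UNIV - (\<Union>d. F d) else {})"
proof (intro set_eqI)
  fix s
  show "s \<in> {s. (LEAST a. s \<in> F a) = c} \<longleftrightarrow> s \<in> (F c - (\<Union>d\<in>{d. d < c}. F d)) \<union> (if (LEAST a::'a. False) = c then UNIV - (\<Union>d. F d) else {})"
  proof (cases "\<exists>d. s \<in> F d")
    case True
    have L: "(LEAST a. s \<in> F a) = Min {a. s \<in> F a}" using True by (intro Least_Min) auto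
    have ne: "{a. s \<in> F a} \<noteq> {}" using True by auto
    have in1: "s \<in> F (Min {a. s \<in> F a})" using Min_in[OF _ ne] by auto
    have le1: "Min {a. s \<in> F a} \<le> d" if "s \<in> F d" for d using that by (intro Min_le) auto
    show ?thesis
    proof
      assume "s \<in> {s. (LEAST a. s \<in> F a) = c}"
      then have "Min {a. s \<in> F a} = c" using L by simp
      then show "s \<in> (F c - (\<Union>d\<in>{d. d < c}. F d)) \<union> (if (LEAST a::'a. False) = c then UNIV - (\<Union>d. F d) else {})"
        using in1 le1 by (auto simp: not_le[symmetric])
    next
      assume H: "s \<in> (F c - (\<Union>d\<in>{d. d < c}. F d)) \<union> (if (LEAST a::'a. False) = c then UNIV - (\<Union>d. F d) else {})"
      then have c1: "s \<in> F c" and c2: "\<forall>d<c. s \<notin> F d" using True by (auto split: if_splits)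
      have "Min {a. s \<in> F a} = c"
      proof (rule antisym)
        show "Min {a. s \<in> F a} \<le> c" using le1 c1 .
        show "c \<le> Min {a. s \<in> F a}" using c2 in1 not_le by blast
      qed
      then show "s \<in> {s. (LEAST a. s \<in> F a) = c}" using L by simp
    qed
  next
    case False
    then have "(\<lambda>a. s \<in> F a) = (\<lambda>a. False)" by auto
    then have L: "(LEAST a. s \<in> F a) = (LEAST a::'a. False)" by simp
    have nF: "s \<notin> F d" for d using False by blast
    show ?thesis unfolding L using nF by auto
  qed
qed

lemma Least_mem_borel:
  fixes F :: "'a::{finite,linorder} \<Rightarrow> ('b::topological_space) set"
  assumes F: "\<And>a. F a \<in> sets borel"
  shows "{s. (LEAST a. s \<in> F a) = c} \<in> sets borel"
proof -
  have U1: "(\<Union>d\<in>{d. d < c}. F d) \<in> sets borel" using F by (intro sets.finite_UN) auto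
  have U2: "(\<Union>d. F d) \<in> sets borel" using F by (intro sets.finite_UN) auto
  have A: "F c - (\<Union>d\<in>{d. d < c}. F d) \<in> sets borel" using F U1 by (rule sets.Diff)
  have B: "(if (LEAST a::'a. False) = c then UNIV - (\<Union>d. F d) else {}) \<in> sets borel"
    using U2 by (auto intro: sets.compl_sets[simplified])
  show ?thesis unfolding Least_mem_eq using A B by (rule sets.Un)
qed

lemma gfun_eq_Least: "gfun s p = (LEAST a. s \<in> Tset a (Gp p))"
  by (simp add: gfun_def Sa_eq_Tset)

lemma D_borel:
  fixes p q :: "'a::{finite,linorder} pmf"
  shows "{s. gfun s p \<noteq> gfun s q} \<in> sets borel"
proof -
  have "{s. gfun s p \<noteq> gfun s q} = (\<Union>c. {s. gfun s p = c} - {s. gfun s q = c})" by auto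
  also have "\<dots> \<in> sets borel"
  proof (intro sets.countable_UN subsetI, clarify)
    fix c
    have g: "{s. gfun s r = c} \<in> sets borel" for r :: "'a pmf"
      unfolding gfun_eq_Least by (rule Least_mem_borel) simp
    show "{s. gfun s p = c} - {s. gfun s q = c} \<in> sets borel" using g[of p] g[of q] by (rule sets.Diff)
  qed
  finally show ?thesis .
qed

lemma gfun_unique:
  fixes p :: "'a::{finite,linorder} pmf"
  assumes a: "s \<in> Tset a (Gp p)" and u: "\<And>b. b \<noteq> a \<Longrightarrow> s \<notin> Tset b (Gp p)"
  shows "gfun s p = a"
  unfolding gfun_eq_Least
proof (rule Least_equality)
  show "s \<in> Tset a (Gp p)" by (rule a)
  fix y assume "s \<in> Tset y (Gp p)"
  then have "y = a" using u by blast
  then show "a \<le> y" by simp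
qed

definition Nset :: "real^'a::{finite,linorder} \<Rightarrow> (real^'a::{finite,linorder}) set" where
  "Nset x = (\<Union>a. \<Union>b\<in>UNIV - {a}. Tset a x \<inter> Tset b x)"

lemma Nset_null:
  fixes x :: "real^'a::{finite,linorder}"
  assumes "x \<in> simplexS"
  shows "Nset x \<in> null_sets uniformS"
  unfolding Nset_def
  by (intro null_sets_UN' countable_finite Tset_pair_null[OF assms]) auto

lemma compl_S_null:
  assumes a1: "(a1::'a::{finite,linorder}) \<noteq> a0"
  shows "- (simplexS :: (real^'a::{finite,linorder}) set) \<in> null_sets uniformS"
proof -
  define S where "S = (simplexS :: (real^'a::{finite,linorder}) set)"
  have Sb: "S \<in> sets borel" by (simp add: S_def)
  have "emeasure (uniform_measure lebesgueH S) (- S) = emeasure lebesgueH (S \<inter> - S) / emeasure lebesgueH S"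
    using Sb by (intro emeasure_uniform_measure) (simp_all add: borel_comp)
  then have "emeasure uniformS (- S) = 0"
    by (simp add: uniformS_def S_def)
  then show ?thesis using Sb by (simp add: null_sets_def borel_comp S_def)
qed

lemma gfun_char:
  fixes p :: "'a::{finite,linorder} pmf"
  assumes sS: "s \<in> simplexS" and sN: "s \<notin> Nset (Gp p)"
  shows "s \<in> Tset b (Gp p) \<longleftrightarrow> gfun s p = b"
proof -
  obtain a where a: "s \<in> Tset a (Gp p)" using Tset_cover[OF Gp_in_S sS] by blast
  have uniq: "c = a" if c: "s \<in> Tset c (Gp p)" for c
  proof (rule ccontr)
    assume ca: "c \<noteq> a"
    have "s \<in> Tset a (Gp p) \<inter> Tset c (Gp p)" using a c by blast
    then have "s \<in> Nset (Gp p)" unfolding Nset_def using ca by blast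
    with sN show False by blast
  qed
  have g: "gfun s p = a" by (rule gfun_unique[OF a]) (use uniq in blast)
  show ?thesis
  proof
    assume "s \<in> Tset b (Gp p)"
    then have "b = a" by (rule uniq)
    then show "gfun s p = b" using g by simp
  next
    assume "gfun s p = b"
    then show "s \<in> Tset b (Gp p)" using g a by simp
  qed
qed



lemma max_eq_half: "max u v = (u + v + \<bar>u - v\<bar>) / 2" for u v :: real
  by (simp add: max_def abs_if field_simps)

lemma min_eq_half: "min u v = (u + v - \<bar>u - v\<bar>) / 2" for u v :: real
  by (simp add: min_def abs_if field_simps)

lemma Gp_nth: "Gp p $ a = pmf p a"
  by (simp add: Gp_def)

lemma tvdist_Gp: "tvdist p q = (1/2) * (\<Sum>a\<in>UNIV. \<bar>Gp p $ a - Gp q $ a\<bar>)"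
  by (simp add: tvdist_def Gp_nth)

lemma ineq_main:
  fixes p q :: "'a::{finite,linorder} pmf"
  assumes a1: "(a1::'a) \<noteq> a0"
  shows "measure uniformS {s. gfun s p \<noteq> gfun s q} \<le> 2 * tvdist p q"
proof -
  interpret prob_space "uniformS :: (real^'a::{finite,linorder}) measure" by (rule prob_uniformS[OF a1])
  define x where "x = Gp p"
  define y where "y = Gp q"
  have xS: "x \<in> simplexS" and yS: "y \<in> simplexS" by (simp_all add: x_def y_def Gp_in_S)
  have xnn: "0 \<le> x$b" and ynn: "0 \<le> y$b" for b using xS yS by (simp_all add: simplexS_def)
  have sx: "(\<Sum>b\<in>UNIV. x$b) = 1" and sy: "(\<Sum>b\<in>UNIV. y$b) = 1" using xS yS by (simp_all add: simplexS_def)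
  define T where "T = tvdist p q"
  have T_eq: "T = (1/2) * (\<Sum>a\<in>UNIV. \<bar>x$a - y$a\<bar>)" by (simp add: T_def x_def y_def tvdist_Gp)
  have T0: "0 \<le> T" unfolding T_eq by (intro mult_nonneg_nonneg sum_nonneg) auto
  define m where "m = (\<lambda>a. min (x$a) (y$a))"
  define w where "w = (\<lambda>a. (\<chi> b. if b = a then m a else max (x$b) (y$b)) :: real^'a::{finite,linorder})"
  define W where "W = (\<lambda>a. \<Sum>b\<in>UNIV. w a $ b)"
  have w_nn: "0 \<le> w a $ b" for a b using xnn[of b] ynn[of b] by (auto simp: w_def m_def)
  have m_nn: "0 \<le> m a" for a using xnn[of a] ynn[of a] by (simp add: m_def)
  have W_ge: "1 \<le> W a" for a
  proof (cases "x$a \<le> y$a")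
    case True
    have "(\<Sum>b\<in>UNIV. x$b) \<le> W a" unfolding W_def
      by (intro sum_mono) (use True in \<open>auto simp: w_def m_def\<close>)
    then show ?thesis using sx by simp
  next
    case False
    have "(\<Sum>b\<in>UNIV. y$b) \<le> W a" unfolding W_def
      by (intro sum_mono) (use False in \<open>auto simp: w_def m_def\<close>)
    then show ?thesis using sy by simp
  qed
  have W_le: "W a \<le> 1 + T" for a
  proof -
    have "W a \<le> (\<Sum>b\<in>UNIV. max (x$b) (y$b))" unfolding W_def
      by (intro sum_mono) (auto simp: w_def m_def)
    also have "\<dots> = (\<Sum>b\<in>UNIV. (x$b + y$b + \<bar>x$b - y$b\<bar>) / 2)" by (simp add: max_eq_half)
    also have "\<dots> = ((\<Sum>b\<in>UNIV. x$b) + (\<Sum>b\<in>UNIV. y$b) + (\<Sum>b\<in>UNIV. \<bar>x$b - y$b\<bar>)) / 2"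
      by (simp add: sum_divide_distrib[symmetric] sum.distrib)
    also have "\<dots> = 1 + T" using sx sy by (simp add: T_eq)
    finally show ?thesis .
  qed
  have sum_m: "(\<Sum>a\<in>UNIV. m a) = 1 - T"
  proof -
    have "(\<Sum>a\<in>UNIV. m a) = (\<Sum>b\<in>UNIV. (x$b + y$b - \<bar>x$b - y$b\<bar>) / 2)" by (simp add: m_def min_eq_half)
    also have "\<dots> = ((\<Sum>b\<in>UNIV. x$b) + (\<Sum>b\<in>UNIV. y$b) - (\<Sum>b\<in>UNIV. \<bar>x$b - y$b\<bar>)) / 2"
      by (simp add: sum_divide_distrib[symmetric] sum.distrib sum_subtractf)
    also have "\<dots> = 1 - T" using sx sy by (simp add: T_eq)
    finally show ?thesis .
  qed
  have sub: "Tset a (w a) \<subseteq> Tset a x \<inter> Tset a y" for a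
  proof
    fix s assume s: "s \<in> Tset a (w a)"
    have sS: "s \<in> simplexS" using s by (simp add: Tset_def)
    have snn: "0 \<le> s$b" for b using sS by (simp add: simplexS_def)
    have ineq: "s$a * w a $ b \<le> s$b * w a $ a" for b using s by (simp add: Tset_def)
    have "s$a * z$b \<le> s$b * z$a" if z: "z = x \<or> z = y" for z b
    proof (cases "b = a")
      case True then show ?thesis by simp
    next
      case False
      have "s$a * z$b \<le> s$a * w a $ b"
        using False z snn[of a] by (intro mult_left_mono) (auto simp: w_def)
      also have "\<dots> \<le> s$b * w a $ a" by (rule ineq)
      also have "\<dots> \<le> s$b * z$a"
        using z snn[of b] by (intro mult_left_mono) (auto simp: w_def m_def)
      finally show ?thesis .
    qed
    then show "s \<in> Tset a x \<inter> Tset a y" using sS by (auto simp: Tset_def)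
  qed
  have PTw: "measure uniformS (Tset a (w a)) = m a / W a" for a
  proof -
    have "0 < W a" using W_ge[of a] by simp
    from measure_Tset_weight[OF a1 w_nn this[unfolded W_def]]
    show ?thesis by (simp add: W_def w_def)
  qed
  have PTx: "measure uniformS (Tset a x) = x$a" for a by (rule measure_Tset[OF a1 xS])
  define N where "N = Nset x \<union> Nset y \<union> - (simplexS :: (real^'a::{finite,linorder}) set)"
  have N_null: "N \<in> null_sets uniformS"
    unfolding N_def using Nset_null[OF xS] Nset_null[OF yS] compl_S_null[OF a1] by auto
  define D where "D = {s. gfun s p \<noteq> gfun s q}"
  have Db: "D \<in> sets uniformS" unfolding D_def using D_borel by simp
  have Dsub: "D \<subseteq> N \<union> (\<Union>a. Tset a x - Tset a (w a))"
  proof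
    fix s assume sD: "s \<in> D"
    show "s \<in> N \<union> (\<Union>a. Tset a x - Tset a (w a))"
    proof (cases "s \<in> N")
      case False
      then have sS: "s \<in> simplexS" and nx: "s \<notin> Nset x" and ny: "s \<notin> Nset y" by (auto simp: N_def)
      define a where "a = gfun s p"
      have sa: "s \<in> Tset a x" using gfun_char[OF sS nx[unfolded x_def]] by (simp add: a_def x_def)
      have "s \<notin> Tset a (w a)"
      proof
        assume "s \<in> Tset a (w a)"
        then have "s \<in> Tset a y" using sub by blast
        then have "gfun s q = a" using gfun_char[OF sS ny[unfolded y_def]] by (simp add: y_def)
        then show False using sD by (simp add: D_def a_def)
      qed
      then show ?thesis using sa by blast
    qed simp
  qed
  have "measure uniformS D \<le> measure uniformS (N \<union> (\<Union>a. Tset a x - Tset a (w a)))"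
    using Dsub N_null by (intro finite_measure_mono) auto
  also have "\<dots> \<le> measure uniformS N + measure uniformS (\<Union>a. Tset a x - Tset a (w a))"
    using N_null by (intro measure_subadditive) (auto simp: emeasure_eq_measure)
  also have "measure uniformS N = 0" using N_null by (rule measure_eq_0_null_sets)
  also have "measure uniformS (\<Union>a. Tset a x - Tset a (w a)) \<le> (\<Sum>a\<in>UNIV. measure uniformS (Tset a x - Tset a (w a)))"
    by (intro finite_measure_subadditive_finite) auto
  also have "\<dots> = (\<Sum>a\<in>UNIV. x$a - m a / W a)"
  proof (intro sum.cong refl)
    fix a
    have "measure uniformS (Tset a x - Tset a (w a)) = measure uniformS (Tset a x) - measure uniformS (Tset a (w a))"
      using sub[of a] by (intro finite_measure_Diff) auto
    then show "measure uniformS (Tset a x - Tset a (w a)) = x$a - m a / W a" by (simp add: PTx PTw)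
  qed
  also have "\<dots> \<le> (\<Sum>a\<in>UNIV. x$a - m a / (1 + T))"
  proof (intro sum_mono)
    fix a
    have "m a / (1 + T) \<le> m a / W a"
      using W_le[of a] W_ge[of a] m_nn[of a] T0 by (intro divide_left_mono) auto
    then show "x$a - m a / W a \<le> x$a - m a / (1 + T)" by simp
  qed
  also have "\<dots> = 1 - (1 - T) / (1 + T)"
    by (simp add: sum_subtractf sum_divide_distrib[symmetric] sum_m sx)
  also have "\<dots> \<le> 2 * T"
  proof -
    have "1 - (1 - T) / (1 + T) = 2 * T / (1 + T)" using T0 by (simp add: field_simps)
    also have "\<dots> \<le> 2 * T" using T0 by (simp add: divide_le_eq field_simps mult_left_mono)
    finally show ?thesis .
  qed
  finally show ?thesis by (simp add: D_def T_def)
qed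

lemma eq_two:
  fixes p q :: "'a::{finite,linorder} pmf"
  assumes a1: "(a1::'a) \<noteq> a0" and U: "(UNIV::'a set) = {a0, a1}" and le: "pmf p a0 \<le> pmf q a0"
  shows "measure uniformS {s. gfun s p \<noteq> gfun s q} = tvdist p q"
proof -
  interpret prob_space "uniformS :: (real^'a::{finite,linorder}) measure" by (rule prob_uniformS[OF a1])
  define x where "x = Gp p"
  define y where "y = Gp q"
  have xS: "x \<in> simplexS" and yS: "y \<in> simplexS" by (simp_all add: x_def y_def Gp_in_S)
  have sum2: "(\<Sum>b\<in>UNIV. f b) = f a0 + f a1" for f :: "'a \<Rightarrow> real"
    unfolding U using a1 by simp
  have sx: "x$a0 + x$a1 = 1" and sy: "y$a0 + y$a1 = 1"
    using xS yS by (simp_all add: simplexS_def sum2)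
  have xy0: "x$a0 \<le> y$a0" using le by (simp add: x_def y_def Gp_nth)
  have sub: "Tset a0 x \<subseteq> Tset a0 y"
  proof
    fix s assume s: "s \<in> Tset a0 x"
    have sS: "s \<in> simplexS" using s by (simp add: Tset_def)
    have snn: "0 \<le> s$b" for b using sS by (simp add: simplexS_def)
    have i1: "s$a0 * x$a1 \<le> s$a1 * x$a0" using s by (simp add: Tset_def)
    have "s$a0 * y$b \<le> s$b * y$a0" for b
    proof -
      have "b = a0 \<or> b = a1" using U by auto
      then show ?thesis
      proof
        assume "b = a1"
        have "s$a0 * y$a1 \<le> s$a0 * x$a1" using sx sy xy0 snn[of a0] by (intro mult_left_mono) auto
        also have "\<dots> \<le> s$a1 * x$a0" by (rule i1)
        also have "\<dots> \<le> s$a1 * y$a0" using xy0 snn[of a1] by (intro mult_left_mono) auto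
        finally show ?thesis using \<open>b = a1\<close> by simp
      qed simp
    qed
    then show "s \<in> Tset a0 y" using sS by (simp add: Tset_def)
  qed
  define N where "N = Nset x \<union> Nset y \<union> - (simplexS :: (real^'a::{finite,linorder}) set)"
  have N_null: "N \<in> null_sets uniformS"
    unfolding N_def using Nset_null[OF xS] Nset_null[OF yS] compl_S_null[OF a1] by (intro null_sets.Un) auto
  have two: "c = a0 \<or> c = a1" for c :: 'a using U by blast
  have "AE s in uniformS. s \<in> {s. gfun s p \<noteq> gfun s q} \<longleftrightarrow> s \<in> Tset a0 y - Tset a0 x"
  proof (rule AE_I'[OF N_null], rule subsetI)
    fix s assume sN: "s \<in> {s \<in> space uniformS. \<not> (s \<in> {s. gfun s p \<noteq> gfun s q} \<longleftrightarrow> s \<in> Tset a0 y - Tset a0 x)}"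
    show "s \<in> N"
    proof (rule ccontr)
      assume "s \<notin> N"
      then have sS: "s \<in> simplexS" and nx: "s \<notin> Nset x" and ny: "s \<notin> Nset y" unfolding N_def by blast+
      have cx: "s \<in> Tset a0 x \<longleftrightarrow> gfun s p = a0" using gfun_char[OF sS nx[unfolded x_def]] by (simp add: x_def)
      have cy: "s \<in> Tset a0 y \<longleftrightarrow> gfun s q = a0" using gfun_char[OF sS ny[unfolded y_def]] by (simp add: y_def)
      have e1: "gfun s p \<noteq> gfun s q \<longleftrightarrow> (gfun s p = a0) \<noteq> (gfun s q = a0)"
        using two[of "gfun s p"] two[of "gfun s q"] a1 by metis
      have e2: "(s \<in> Tset a0 x) \<noteq> (s \<in> Tset a0 y) \<longleftrightarrow> s \<in> Tset a0 y - Tset a0 x"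
        using sub by blast
      have "s \<in> {s. gfun s p \<noteq> gfun s q} \<longleftrightarrow> s \<in> Tset a0 y - Tset a0 x"
        unfolding mem_Collect_eq e1 cx[symmetric] cy[symmetric] e2 ..
      then show False using sN by blast
    qed
  qed
  then have "measure uniformS {s. gfun s p \<noteq> gfun s q} = measure uniformS (Tset a0 y - Tset a0 x)"
    using D_borel by (intro measure_eq_AE) auto
  also have "\<dots> = y$a0 - x$a0"
    using sub by (simp add: finite_measure_Diff measure_Tset[OF a1 xS] measure_Tset[OF a1 yS])
  also have "\<dots> = tvdist p q"
  proof -
    have "tvdist p q = (1/2) * (\<bar>x$a0 - y$a0\<bar> + \<bar>x$a1 - y$a1\<bar>)"
      by (simp add: tvdist_Gp sum2 x_def y_def)
    also have "\<dots> = y$a0 - x$a0" using sx sy xy0 by simp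
    finally show ?thesis by simp
  qed
  finally show ?thesis .
qed

lemma tvdist_sym: "tvdist p q = tvdist q p"
  by (simp add: tvdist_def abs_minus_commute)

lemma tvdist_nonneg: "0 \<le> tvdist p q"
  by (simp add: tvdist_def sum_nonneg)

theorem proposition9:
  fixes p q :: "'a::{finite,linorder} pmf"
  shows "{s. gfun s p \<noteq> gfun s q} \<in> sets uniformS
       \<and> measure uniformS {s. gfun s p \<noteq> gfun s q} \<le> 2 * tvdist p q
       \<and> (CARD('a) = 2 \<longrightarrow> measure uniformS {s. gfun s p \<noteq> gfun s q} = tvdist p q)"
proof -
  have Db: "{s. gfun s p \<noteq> gfun s q} \<in> sets uniformS" using D_borel by simp
  show ?thesis
  proof (cases "\<exists>a1::'a. a1 \<noteq> a0")
    case True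
    then obtain a1 :: 'a where a1: "a1 \<noteq> a0" by blast
    have eq: "measure uniformS {s. gfun s p \<noteq> gfun s q} = tvdist p q" if c2: "CARD('a) = 2"
    proof -
      have U: "(UNIV::'a set) = {a0, a1}"
      proof (rule sym, rule card_subset_eq)
        show "card {a0, a1} = card (UNIV::'a set)" using a1 c2 by simp
      qed auto
      show ?thesis
      proof (cases "pmf p a0 \<le> pmf q a0")
        case True
        then show ?thesis by (rule eq_two[OF a1 U])
      next
        case False
        then have "pmf q a0 \<le> pmf p a0" by simp
        from eq_two[OF a1 U this] show ?thesis
          by (simp add: tvdist_sym eq_commute)
      qed
    qed
    show ?thesis using Db ineq_main[OF a1] eq by blast
  next
    case False
    then have all: "b = a0" for b :: 'a by blast
    have U: "(UNIV::'a set) = {a0}" using all by blast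
    have pm: "pmf r a0 = 1" for r :: "'a pmf"
    proof -
      have "sum (pmf r) UNIV = 1" by (rule sum_pmf_eq_1) auto
      then show ?thesis unfolding U by simp
    qed
    have "p = q" by (rule pmf_eqI) (metis all pm)
    then have "{s. gfun s p \<noteq> gfun s q} = {}" by simp
    moreover have "CARD('a) = 1" by (simp add: U)
    ultimately show ?thesis using tvdist_nonneg[of p q] by simp
  qed
qed


end
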